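(* Let $\mathcal{X},\mathcal{Y}$ be finite sets, $P$ and $Q$ joint probability mass functions on $\mathcal{X}\times\mathcal{Y}$ that are strictly positive everywhere, $q\in\mathbb{R}$ and $\rho>0$. Let $G_Q^\ast$ be a conditional guessing function such that for all $y$ and $x,x'$, $G_Q^\ast(x|y)<G_Q^\ast(x'|y)$ implies $Q_q(x|y)\ge Q_q(x'|y)$. Then, with $E_q$ taken with respect to $P$, $$ E_q\left[G_Q^\ast(X|Y)^\rho\right]\;\leq\;\sum_{y\in\mathcal{Y}}P_q(\cdot,y)\sum_{x\in\mathcal{X}}P_q(x|y)\left[\sum_{x'\in\mathcal{X}}\left(\frac{Q_q(x'|y)}{Q_q(x|y)}\right)^{\frac{1}{1+\rho}}\right]^{\rho}. $$
   Context: A conditional guessing function is a map $G(\cdot|\cdot)$ on $\mathcal{X}\times\mathcal{Y}$ such that for each $y$, $x\mapsto G(x|y)$ is a bijection from $\mathcal{X}$ onto $\{1,\dots,|\mathcal{X}|\}$. The $q$-normalized expectation under $P$ is $E_q[F(X,Y)]=\frac{\sum_{x,y}F(x,y)P(x,y)^q}{\sum_{x,y}P(x,y)^q}$. For a strictly positive joint pmf $R$ on $\mathcal{X}\times\mathcal{Y}$: $R(x|y)=R(x,y)/\sum_{x'}R(x',y)$, $R_q(x|y)=\frac{R(x|y)^q}{\sum_{x'}R(x'|y)^q}$, and $R_q(\cdot,y)=\frac{\sum_{x}R(x,y)^q}{\sum_{x',y'}R(x',y')^q}$; this applies to $R=P$ and $R=Q$. *)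

theory Defs
  imports "HOL-Analysis.Analysis"
begin

definition is_pmf :: "('a \<times> 'b \<Rightarrow> real) \<Rightarrow> bool" where
  "is_pmf R \<longleftrightarrow> (\<forall>z. R z \<ge> 0) \<and> (\<Sum>z\<in>UNIV. R z) = 1"

definition cond_guessing_function :: "('a::finite \<Rightarrow> 'b \<Rightarrow> nat) \<Rightarrow> bool" where
  "cond_guessing_function G \<longleftrightarrow> (\<forall>y. bij_betw (\<lambda>x. G x y) UNIV {1..CARD('a)})"

definition cond_pmf :: "('a::finite \<times> 'b \<Rightarrow> real) \<Rightarrow> 'a \<Rightarrow> 'b \<Rightarrow> real" where
  "cond_pmf R x y = R (x, y) / (\<Sum>x'\<in>UNIV. R (x', y))"

definition cond_q :: "real \<Rightarrow> ('a::finite \<times> 'b \<Rightarrow> real) \<Rightarrow> 'a \<Rightarrow> 'b \<Rightarrow> real" where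
  "cond_q q R x y = cond_pmf R x y powr q / (\<Sum>x'\<in>UNIV. cond_pmf R x' y powr q)"

definition marg_q :: "real \<Rightarrow> ('a::finite \<times> 'b::finite \<Rightarrow> real) \<Rightarrow> 'b \<Rightarrow> real" where
  "marg_q q R y = (\<Sum>x\<in>UNIV. R (x, y) powr q) / (\<Sum>z\<in>UNIV. R z powr q)"

definition E_q :: "real \<Rightarrow> ('a::finite \<times> 'b::finite \<Rightarrow> real) \<Rightarrow> ('a \<Rightarrow> 'b \<Rightarrow> real) \<Rightarrow> real" where
  "E_q q P F = (\<Sum>(x, y)\<in>UNIV. F x y * P (x, y) powr q) / (\<Sum>z\<in>UNIV. P z powr q)"

end

theory Submission
  imports Defs
begin

lemma cond_q_pos:
  fixes R :: "'x::finite \<times> 'y::finite \<Rightarrow> real"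
  assumes "\<forall>z. R z > 0"
  shows "cond_q q R x y > 0"
proof -
  have m: "(\<Sum>x'\<in>UNIV. R (x', y)) > 0"
    using assms by (intro sum_pos) auto
  have cp: "\<And>x. cond_pmf R x y > 0" unfolding cond_pmf_def using assms m by auto
  have "(\<Sum>x'\<in>UNIV. cond_pmf R x' y powr q) > 0"
    using cp by (intro sum_pos) (auto simp: less_imp_neq[symmetric] dest: spec)
  moreover have "cond_pmf R x y powr q > 0" using cp[of x] by simp
  ultimately show ?thesis unfolding cond_q_def by simp
qed

lemma cond_q_eq:
  fixes R :: "'x::finite \<times> 'y::finite \<Rightarrow> real"
  assumes "\<forall>z. R z > 0"
  shows "cond_q q R x y = R (x,y) powr q / (\<Sum>x'\<in>UNIV. R (x', y) powr q)"
proof -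
  define m where "m = (\<Sum>x'\<in>UNIV. R (x', y))"
  have m: "m > 0" unfolding m_def using assms by (intro sum_pos) auto
  have e: "\<And>x. cond_pmf R x y powr q = R (x,y) powr q / m powr q"
    unfolding cond_pmf_def m_def[symmetric] using assms m
    by (simp add: powr_divide less_imp_le)
  have "(\<Sum>x'\<in>UNIV. cond_pmf R x' y powr q) = (\<Sum>x'\<in>UNIV. R (x', y) powr q) / m powr q"
    by (simp add: e sum_divide_distrib)
  moreover have "m powr q > 0" using m by simp
  ultimately show ?thesis unfolding cond_q_def e by simp
qed

lemma G_bound:
  fixes G :: "'x::finite \<Rightarrow> 'y \<Rightarrow> nat" and f :: "'x \<Rightarrow> real"
  assumes "cond_guessing_function G"
    and mono: "\<forall>x'. G x' y < G x y \<longrightarrow> f x' \<ge> 1"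
    and fx: "f x \<ge> 1"
    and nn: "\<forall>x'. f x' \<ge> 0"
  shows "real (G x y) \<le> (\<Sum>x'\<in>UNIV. f x')"
proof -
  have bij: "bij_betw (\<lambda>x. G x y) UNIV {1..CARD('x)}"
    using assms(1) unfolding cond_guessing_function_def by blast
  define A where "A = {x'. G x' y \<le> G x y}"
  have inj: "inj_on (\<lambda>x. G x y) A" using bij unfolding bij_betw_def by (auto intro: inj_on_subset)
  have img: "(\<lambda>x. G x y) ` A = {1..G x y}"
  proof
    show "(\<lambda>x. G x y) ` A \<subseteq> {1..G x y}"
      using bij unfolding A_def bij_betw_def by auto
    show "{1..G x y} \<subseteq> (\<lambda>x. G x y) ` A"
    proof
      fix k assume k: "k \<in> {1..G x y}"
      have "G x y \<in> {1..CARD('x)}" using bij unfolding bij_betw_def by auto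
      hence "k \<in> {1..CARD('x)}" using k by auto
      then obtain x' where "k = G x' y" using bij unfolding bij_betw_def by (metis imageE)
      thus "k \<in> (\<lambda>x. G x y) ` A" using k unfolding A_def by auto
    qed
  qed
  have "card A = G x y" using card_image[OF inj] img by simp
  hence "real (G x y) = (\<Sum>x'\<in>A. 1)" by simp
  also have "\<dots> \<le> (\<Sum>x'\<in>A. f x')"
  proof (rule sum_mono)
    fix x' assume "x' \<in> A"
    hence "G x' y < G x y \<or> G x' y = G x y" unfolding A_def by auto
    moreover have "G x' y = G x y \<Longrightarrow> x' = x"
      using bij unfolding bij_betw_def inj_def by auto
    ultimately show "1 \<le> f x'" using mono fx by auto
  qed
  also have "\<dots> \<le> (\<Sum>x'\<in>UNIV. f x')"
    using nn by (intro sum_mono2) auto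
  finally show ?thesis .
qed

theorem theorem4:
  fixes P Q :: "'x::finite \<times> 'y::finite \<Rightarrow> real"
    and q \<rho> :: real
    and G :: "'x \<Rightarrow> 'y \<Rightarrow> nat"
  assumes "is_pmf P" and "is_pmf Q"
    and "\<forall>z. P z > 0" and "\<forall>z. Q z > 0"
    and "\<rho> > 0"
    and "cond_guessing_function G"
    and "\<forall>y x x'. G x y < G x' y \<longrightarrow> cond_q q Q x y \<ge> cond_q q Q x' y"
  shows "E_q q P (\<lambda>x y. real (G x y) powr \<rho>)
    \<le> (\<Sum>y\<in>UNIV. marg_q q P y * (\<Sum>x\<in>UNIV. cond_q q P x y *
          (\<Sum>x'\<in>UNIV. (cond_q q Q x' y / cond_q q Q x y) powr (1 / (1 + \<rho>))) powr \<rho>))"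
proof -
  define Z where "Z = (\<Sum>z\<in>UNIV. P z powr q)"
  have Z: "Z > 0" unfolding Z_def using assms(3) by (intro sum_pos) (auto simp: less_imp_neq[symmetric])
  define S where "S x y = (\<Sum>x'\<in>UNIV. (cond_q q Q x' y / cond_q q Q x y) powr (1 / (1 + \<rho>)))" for x y
  have GS: "real (G x y) \<le> S x y" for x y
    unfolding S_def
  proof (rule G_bound[OF assms(6)])
    have qp: "\<And>x. cond_q q Q x y > 0" using cond_q_pos assms(4) by blast
    have ge1: "(cond_q q Q x' y / cond_q q Q x y) powr (1 / (1 + \<rho>)) \<ge> 1"
      if "cond_q q Q x' y \<ge> cond_q q Q x y" for x'
    proof -
      have "cond_q q Q x' y / cond_q q Q x y \<ge> 1" using that qp[of x] by simp
      thus ?thesis using assms(5) by (simp add: ge_one_powr_ge_zero)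
    qed
    show "\<forall>x'. G x' y < G x y \<longrightarrow> 1 \<le> (cond_q q Q x' y / cond_q q Q x y) powr (1 / (1 + \<rho>))"
      using assms(7) ge1 by blast
    show "1 \<le> (cond_q q Q x y / cond_q q Q x y) powr (1 / (1 + \<rho>))" using ge1 qp[of x] by simp
    show "\<forall>x'. 0 \<le> (cond_q q Q x' y / cond_q q Q x y) powr (1 / (1 + \<rho>))" by simp
  qed
  have prod: "marg_q q P y * cond_q q P x y = P (x,y) powr q / Z" for x y
  proof -
    have m: "(\<Sum>x\<in>UNIV. P (x, y) powr q) > 0" using assms(3) by (intro sum_pos) (auto simp: less_imp_neq[symmetric])
    show ?thesis unfolding marg_q_def cond_q_eq[OF assms(3)] Z_def using m by simp
  qed
  have "E_q q P (\<lambda>x y. real (G x y) powr \<rho>) = (\<Sum>y\<in>UNIV. \<Sum>x\<in>UNIV. real (G x y) powr \<rho> * (P (x, y) powr q / Z))"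
  proof -
    have "(\<Sum>(x, y)\<in>(UNIV::('x\<times>'y) set). real (G x y) powr \<rho> * P (x, y) powr q)
       = (\<Sum>x\<in>UNIV. \<Sum>y\<in>UNIV. real (G x y) powr \<rho> * P (x, y) powr q)"
      unfolding UNIV_Times_UNIV[symmetric] by (rule sum.cartesian_product[symmetric])
    also have "\<dots> = (\<Sum>y\<in>UNIV. \<Sum>x\<in>UNIV. real (G x y) powr \<rho> * P (x, y) powr q)"
      by (rule sum.swap)
    finally show ?thesis unfolding E_q_def Z_def[symmetric]
      by (simp add: sum_divide_distrib)
  qed
  also have "\<dots> \<le> (\<Sum>y\<in>UNIV. \<Sum>x\<in>UNIV. S x y powr \<rho> * (P (x, y) powr q / Z))"
    using Z GS assms(5) by (intro sum_mono mult_right_mono powr_mono2) (auto simp: less_imp_le)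
  also have "\<dots> = (\<Sum>y\<in>UNIV. marg_q q P y * (\<Sum>x\<in>UNIV. cond_q q P x y * S x y powr \<rho>))"
    by (simp add: sum_distrib_left mult.assoc[symmetric] prod mult.commute)
  finally show ?thesis unfolding S_def .
qed

end
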